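(* For every term $\xi\in\Lambda$: if $\xi\Vdash\top,\bot\to\bot$ and $\xi\Vdash\bot,\top\to\bot$, then $\xi\Vdash\top,\top\to\bot$. Consequently, $\lambda x(x)I\,I\Vdash\neg\forall x^{\beth 2}(x\neq0,x\neq1\to\bot)$ and $W\Vdash\forall x^{\beth 2}(\forall y^{\beth 2}(y\neq0,y\neq x\to y\not\le x),x\neq0\to\bot)$.
   Context: Fix an integer $N\ge 0$. The set $\Lambda$ of terms is the smallest set containing the constants $B,C,I,K,W,cc,A$ and $p,q_0,\dots,q_N$, closed under application $(\xi)\eta$ (written $\xi\eta$), and containing, for each sequence $(\xi_i)_{i\in\mathbb N}$ of closed terms (no occurrence of $p,q_0,\dots,q_N$), a constant $\bigwedge_i\xi_i$ (injectively, well-founded). Stacks: finite sequences $t_0\cdot\ldots\cdot t_{n-1}\cdot\pi_0$ of terms, $\pi_0$ the empty stack; $\Pi$ the set of stacks. $\ell_t=((C)(B)CB)t$, $k_{\pi_0}=A$, $k_{t\cdot\pi}=(\ell_t)k_\pi$; $\sigma=(BW)(C)(B)BB$, $\underline0=(K)I$, $\underline{n+1}=(\sigma)\underline n$. Execution $\succ$: least preorder on $\Lambda\times\Pi$ with $(\xi)\eta\star\pi\succ\xi\star\eta\cdot\pi$; $B\star\xi\cdot\eta\cdot\zeta\cdot\pi\succ\xi\star(\eta)\zeta\cdot\pi$; $C\star\xi\cdot\eta\cdot\zeta\cdot\pi\succ\xi\star\zeta\cdot\eta\cdot\pi$; $I\star\xi\cdot\pi\succ\xi\star\pi$; $K\star\xi\cdot\eta\cdot\pi\succ\xi\star\pi$;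 $W\star\xi\cdot\eta\cdot\pi\succ\xi\star\eta\cdot\eta\cdot\pi$; $cc\star\xi\cdot\pi\succ\xi\star k_\pi\cdot\pi$; $A\star\xi\cdot\pi\succ\xi\star\pi_0$; $\bigwedge_i\xi_i\star\underline n\cdot\pi\succ\xi_n\star\pi$. Pole $\perp\!\!\!\perp=\{\xi\star\pi:\exists\varpi,\ \xi\star\pi\succ p\star\varpi\}$. $\lambda$-terms are translated into terms by the usual combinatory translation. Realizability (Krivine): $\xi\Vdash F$ iff $\xi\star\pi\in\perp\!\!\!\perp$ for all $\pi\in\|F\|$, with $\|\bot\|=\Pi$, $\|\top\|=\emptyset$, $\|A\to B\|=\{\eta\cdot\pi:\eta\Vdash A,\pi\in\|B\|\}$, $A_1,A_2\to B$ means $A_1\to(A_2\to B)$, $\neg A$ means $A\to\bot$, $\|\forall x F[x]\|=\bigcup_a\|F[a]\|$. $\beth2$ is the characteristic Boolean algebra of the realizability model, with underlying set $\{0,1\}$ (ordered by $0\le1$); the relativized quantifier satisfies $\|\forall x^{\beth 2}F[x]\|=\|F[0]\|\cup\|F[1]\|$, and for $a,b\in\{0,1\}$ the atomic formulas $a\neq b$, $a\not\le b$ are interpreted as $\top$ when true and $\bot$ when false. *)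

theory Defs
  imports Main
begin

text \<open>Raw terms. The set Lambda of the paper is carved out by wf_term N below:
  q_i only for i <= N, and the constant Wedge f only for sequences f of closed terms.\<close>
datatype trm =
    cB | cC | cI | cK | cW | cc | cA
  | cp
  | cq nat
  | App trm trm
  | Wedge "nat \<Rightarrow> trm"

primrec closed :: "trm \<Rightarrow> bool" where
  "closed cB = True" | "closed cC = True" | "closed cI = True" | "closed cK = True"
| "closed cW = True" | "closed cc = True" | "closed cA = True"
| "closed cp = False"
| "closed (cq i) = False"
| "closed (App s t) = (closed s \<and> closed t)"
| "closed (Wedge f) = (\<forall>i. closed (f i))"

primrec wf_term :: "nat \<Rightarrow> trm \<Rightarrow> bool" where
  "wf_term N cB = True" | "wf_term N cC = True" | "wf_term N cI = True" | "wf_term N cK = True"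
| "wf_term N cW = True" | "wf_term N cc = True" | "wf_term N cA = True"
| "wf_term N cp = True"
| "wf_term N (cq i) = (i \<le> N)"
| "wf_term N (App s t) = (wf_term N s \<and> wf_term N t)"
| "wf_term N (Wedge f) = (\<forall>i. closed (f i))"

type_synonym stack = "trm list"

definition wf_stack :: "nat \<Rightarrow> stack \<Rightarrow> bool" where
  "wf_stack N \<pi> = (\<forall>t\<in>set \<pi>. wf_term N t)"

definition ell :: "trm \<Rightarrow> trm" where
  "ell t = App (App cC (App (App cB cC) cB)) t"

primrec kont :: "stack \<Rightarrow> trm" where
  "kont [] = cA"
| "kont (t # \<pi>) = App (ell t) (kont \<pi>)"

definition sigma :: trm where
  "sigma = App (App cB cW) (App cC (App (App cB cB) cB))"

primrec numeral_trm :: "nat \<Rightarrow> trm" where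
  "numeral_trm 0 = App cK cI"
| "numeral_trm (Suc n) = App sigma (numeral_trm n)"

inductive step :: "trm \<times> stack \<Rightarrow> trm \<times> stack \<Rightarrow> bool" where
  push: "step (App s t, \<pi>) (s, t # \<pi>)"
| rB: "step (cB, x # y # z # \<pi>) (x, App y z # \<pi>)"
| rC: "step (cC, x # y # z # \<pi>) (x, z # y # \<pi>)"
| rI: "step (cI, x # \<pi>) (x, \<pi>)"
| rK: "step (cK, x # y # \<pi>) (x, \<pi>)"
| rW: "step (cW, x # y # \<pi>) (x, y # y # \<pi>)"
| rcc: "step (cc, x # \<pi>) (x, kont \<pi> # \<pi>)"
| rA: "step (cA, x # \<pi>) (x, [])"
| rWedge: "step (Wedge f, numeral_trm n # \<pi>) (f n, \<pi>)"

definition exec :: "trm \<times> stack \<Rightarrow> trm \<times> stack \<Rightarrow> bool" where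
  "exec = step\<^sup>*\<^sup>*"

definition pole :: "(trm \<times> stack) set" where
  "pole = {(\<xi>, \<pi>). \<exists>\<omega>. exec (\<xi>, \<pi>) (cp, \<omega>)}"

text \<open>Elements of beth2 = {0,1} are represented by bool (False = 0, True = 1),
  ordered by False \<le> True.\<close>
datatype form =
    FBot | FTop
  | Imp form form
  | ForallB "bool \<Rightarrow> form"
  | Neq bool bool
  | NotLe bool bool

definition Neg :: "form \<Rightarrow> form" where
  "Neg F = Imp F FBot"

primrec fval :: "nat \<Rightarrow> form \<Rightarrow> stack set" where
  "fval N FBot = {\<pi>. wf_stack N \<pi>}"
| "fval N FTop = {}"
| "fval N (Imp F G) =
     {\<eta> # \<pi> | \<eta> \<pi>. wf_term N \<eta> \<and> (\<forall>\<rho>\<in>fval N F. (\<eta>, \<rho>) \<in> pole) \<and> \<pi> \<in> fval N G}"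
| "fval N (ForallB F) = fval N (F False) \<union> fval N (F True)"
| "fval N (Neq a b) = (if a \<noteq> b then {} else {\<pi>. wf_stack N \<pi>})"
| "fval N (NotLe a b) = (if \<not> (a \<le> b) then {} else {\<pi>. wf_stack N \<pi>})"

definition realizes :: "nat \<Rightarrow> trm \<Rightarrow> form \<Rightarrow> bool" where
  "realizes N \<xi> F = (\<forall>\<pi>\<in>fval N F. (\<xi>, \<pi>) \<in> pole)"

text \<open>Combinatory translation of \<lambda>x (x)I I:
  \<lambda>x x = I; \<lambda>x (t)u = ((C)(\<lambda>x t))u when x not in u.
  So \<lambda>x (x)I = ((C)I)I and \<lambda>x ((x)I)I = ((C)((C)I)I)I.\<close>
definition lamxII :: trm where
  "lamxII = App (App cC (App (App cC cI) cI)) cI"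

end

theory Submission
  imports Defs
begin

datatype mt = Lf trm | MA mt mt | M1 | M2

primrec inst :: "trm \<Rightarrow> trm \<Rightarrow> mt \<Rightarrow> trm" where
  "inst a b (Lf t) = t"
| "inst a b (MA x y) = App (inst a b x) (inst a b y)"
| "inst a b M1 = a"
| "inst a b M2 = b"

primrec nomark :: "mt \<Rightarrow> bool" where
  "nomark (Lf t) = True"
| "nomark (MA x y) = (nomark x \<and> nomark y)"
| "nomark M1 = False"
| "nomark M2 = False"

primrec mkont :: "mt list \<Rightarrow> mt" where
  "mkont [] = Lf cA"
| "mkont (t # \<pi>) = MA (MA (Lf (App cC (App (App cB cC) cB))) t) (mkont \<pi>)"

lemma inst_mkont: "inst a b (mkont \<pi>) = kont (map (inst a b) \<pi>)"
  by (induction \<pi>) (auto simp: ell_def)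

lemma nomark_inst: "nomark x \<Longrightarrow> inst a b x = inst a' b' x"
  by (induction x) auto

inductive mstep :: "mt \<times> mt list \<Rightarrow> mt \<times> mt list \<Rightarrow> bool" where
  mA: "mstep (MA x y, \<pi>) (x, y # \<pi>)"
| mL: "mstep (Lf (App s t), \<pi>) (Lf s, Lf t # \<pi>)"
| mB: "mstep (Lf cB, x # y # z # \<pi>) (x, MA y z # \<pi>)"
| mC: "mstep (Lf cC, x # y # z # \<pi>) (x, z # y # \<pi>)"
| mI: "mstep (Lf cI, x # \<pi>) (x, \<pi>)"
| mK: "mstep (Lf cK, x # y # \<pi>) (x, \<pi>)"
| mW: "mstep (Lf cW, x # y # \<pi>) (x, y # y # \<pi>)"
| mcc: "mstep (Lf cc, x # \<pi>) (x, mkont \<pi> # \<pi>)"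
| mAA: "mstep (Lf cA, x # \<pi>) (x, [])"
| mWe: "nomark x \<Longrightarrow> inst cA cA x = numeral_trm n \<Longrightarrow> mstep (Lf (Wedge f), x # \<pi>) (Lf (f n), \<pi>)"

fun instS :: "trm \<Rightarrow> trm \<Rightarrow> mt \<times> mt list \<Rightarrow> trm \<times> stack" where
  "instS a b (h, \<pi>) = (inst a b h, map (inst a b) \<pi>)"

lemma sim: "mstep X Y \<Longrightarrow> step (instS a b X) (instS a b Y)"
proof (induction rule: mstep.induct)
  case (mWe x n f \<pi>)
  then have "inst a b x = numeral_trm n" using nomark_inst by metis
  then show ?case using step.rWedge[of f n "map (inst a b) \<pi>"] by simp
qed (auto intro: step.intros simp: inst_mkont)

lemma sim_star: "mstep\<^sup>*\<^sup>* X Y \<Longrightarrow> step\<^sup>*\<^sup>* (instS a b X) (instS a b Y)"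
  by (induction rule: rtranclp_induct) (auto intro: rtranclp.rtrancl_into_rtrancl sim)

lemma numeral_inj: "numeral_trm m = numeral_trm n \<Longrightarrow> m = n"
proof (induction m arbitrary: n)
  case 0 then show ?case by (cases n) (auto simp: sigma_def)
next
  case (Suc m) then show ?case by (cases n) (auto simp: sigma_def)
qed

lemma step_det: "step s t1 \<Longrightarrow> step s t2 \<Longrightarrow> t1 = t2"
  by (induction rule: step.induct) (auto elim: step.cases dest: numeral_inj)

lemma mstep_det: "mstep s t1 \<Longrightarrow> mstep s t2 \<Longrightarrow> t1 = t2"
proof (induction rule: mstep.induct)
  case (mWe x n f \<pi>)
  from mWe(3) show ?case by cases (use mWe(2) numeral_inj in metis)+
qed (auto elim: mstep.cases)

lemma closed_numeral: "closed (numeral_trm n)"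
  by (induction n) (auto simp: sigma_def)

lemma inst_notclosed: "\<not> closed a \<Longrightarrow> \<not> closed b \<Longrightarrow> \<not> nomark x \<Longrightarrow> \<not> closed (inst a b x)"
  by (induction x) auto

lemma progress_lf:
  assumes "step (t, map (inst a b) \<pi>) s'" "\<not> closed a" "\<not> closed b"
  shows "\<exists>Y. mstep (Lf t, \<pi>) Y"
  using assms(1)
proof cases
  case (rWedge f n \<pi>')
  then obtain x r where x: "\<pi> = x # r" "inst a b x = numeral_trm n"
    by (auto simp: Cons_eq_map_conv)
  have nm: "nomark x"
    using x(2) inst_notclosed[OF assms(2,3), of x] closed_numeral[of n] by auto
  then have "inst cA cA x = numeral_trm n" using x(2) nomark_inst by metis
  then show ?thesis using x nm rWedge by (auto intro: mstep.mWe)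
qed (auto simp: Cons_eq_map_conv intro: mstep.intros)

lemma progress:
  assumes "step (instS a b X) s'" "\<not> closed a" "\<not> closed b"
    "fst X \<noteq> M1" "fst X \<noteq> M2"
  shows "\<exists>Y. mstep X Y"
proof -
  obtain h \<pi> where X: "X = (h, \<pi>)" by force
  show ?thesis
  proof (cases h)
    case (Lf t) then show ?thesis using progress_lf assms X by auto
  next
    case (MA x y) then show ?thesis using X mstep.mA by blast
  qed (use assms X in auto)
qed

lemma stuck: "mstep X Y \<Longrightarrow> fst X \<noteq> Lf cp \<and> fst X \<noteq> M1 \<and> fst X \<noteq> M2"
  by (induction rule: mstep.induct) auto

lemma noq: "\<not> step (cq i, \<pi>) s"
  by (auto elim: step.cases)

lemma reach:
  assumes "exec s (cp, \<omega>)" "a = cq 0 \<or> a = cp" "b = cq 0 \<or> b = cp"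
  shows "s = instS a b X \<Longrightarrow> \<exists>X'. mstep\<^sup>*\<^sup>* X X' \<and>
     (fst X' = Lf cp \<or> (fst X' = M1 \<and> a = cp) \<or> (fst X' = M2 \<and> b = cp))"
  using assms(1) unfolding exec_def
proof (induction arbitrary: X rule: converse_rtranclp_induct)
  case base
  obtain h \<pi> where X: "X = (h, \<pi>)" by force
  show ?case using base X by (cases h) auto
next
  case (step s s1)
  obtain h \<pi> where X: "X = (h, \<pi>)" by force
  have nca: "\<not> closed a" "\<not> closed b" using assms(2,3) by auto
  show ?case
  proof (cases "h = M1 \<or> h = M2")
    case True
    show ?thesis
    proof (cases "h = M1")
      case True
      then have "step (a, map (inst a b) \<pi>) s1" using step(1,4) X by simp
      then have "a = cp" using assms(2) noq by blast
      then show ?thesis using True X by auto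
    next
      case False
      then have "h = M2" using \<open>h = M1 \<or> h = M2\<close> by simp
      then have "step (b, map (inst a b) \<pi>) s1" using step(1,4) X by simp
      then have "b = cp" using assms(3) noq by blast
      then show ?thesis using \<open>h = M2\<close> X by auto
    qed
  next
    case False
    then obtain Y where Y: "mstep X Y" using progress[of a b X s1] step(1,4) X nca by auto
    then have "s1 = instS a b Y" using sim[OF Y, of a b] step(1,4) step_det by auto
    then obtain X' where "mstep\<^sup>*\<^sup>* Y X'" "fst X' = Lf cp \<or> (fst X' = M1 \<and> a = cp) \<or> (fst X' = M2 \<and> b = cp)"
      using step(3) by blast
    then show ?thesis using Y by (meson converse_rtranclp_into_rtranclp)
  qed
qed

lemma det_prefix:
  assumes det: "\<And>u v w. r u v \<Longrightarrow> r u w \<Longrightarrow> v = w"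
  shows "r\<^sup>*\<^sup>* x y \<Longrightarrow> r\<^sup>*\<^sup>* x z \<Longrightarrow> r\<^sup>*\<^sup>* y z \<or> r\<^sup>*\<^sup>* z y"
proof (induction arbitrary: z rule: converse_rtranclp_induct)
  case base then show ?case by simp
next
  case (step x x1)
  show ?case
  proof (cases "z = x")
    case True then show ?thesis using step(1,2) by (meson converse_rtranclp_into_rtranclp)
  next
    case False
    then obtain z1 where z1: "r x z1" "r\<^sup>*\<^sup>* z1 z" using step(4) by (metis converse_rtranclpE)
    then have "z1 = x1" using det step(1) by blast
    then show ?thesis using step(3) z1(2) by simp
  qed
qed

lemma pole_p: "(cp, \<rho>) \<in> pole"
  by (auto simp: pole_def exec_def)

lemma pole_back: "exec s s' \<Longrightarrow> s' \<in> pole \<Longrightarrow> s \<in> pole"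
  by (auto simp: pole_def exec_def intro: rtranclp_trans)

lemma core:
  assumes h1: "(\<xi>, cq 0 # cp # \<pi>) \<in> pole" and h2: "(\<xi>, cp # cq 0 # \<pi>) \<in> pole"
  shows "(\<xi>, \<eta> # \<eta>' # \<pi>) \<in> pole"
proof -
  define X where "X = (Lf \<xi>, M1 # M2 # map Lf \<pi>)"
  have mapid: "\<And>a b. map (inst a b \<circ> Lf) \<pi> = \<pi>" by (induction \<pi>) auto
  from h1 obtain \<omega> where "exec (instS (cq 0) cp X) (cp, \<omega>)"
    by (auto simp: pole_def X_def mapid)
  from reach[where a="cq 0" and b=cp and X=X, OF this] obtain X1 where X1: "mstep\<^sup>*\<^sup>* X X1" "fst X1 = Lf cp \<or> fst X1 = M2"
    by fastforce
  from h2 obtain \<omega>' where "exec (instS cp (cq 0) X) (cp, \<omega>')"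
    by (auto simp: pole_def X_def mapid)
  from reach[where a=cp and b="cq 0" and X=X, OF this] obtain X2 where X2: "mstep\<^sup>*\<^sup>* X X2" "fst X2 = Lf cp \<or> fst X2 = M1"
    by fastforce
  have "mstep\<^sup>*\<^sup>* X1 X2 \<or> mstep\<^sup>*\<^sup>* X2 X1"
    using det_prefix[of mstep X X1 X2] mstep_det X1(1) X2(1) by blast
  then have "X1 = X2"
    using X1(2) X2(2) by (metis converse_rtranclpE stuck)
  then have "fst X1 = Lf cp" using X1(2) X2(2) by auto
  then obtain r where "X1 = (Lf cp, r)" by (cases X1) auto
  then have "exec (instS \<eta> \<eta>' X) (cp, map (inst \<eta> \<eta>') r)"
    using sim_star[OF X1(1), of \<eta> \<eta>'] by (simp add: exec_def)
  then show ?thesis using pole_back pole_p by (simp add: X_def mapid)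
qed

lemma part1:
  assumes "realizes N \<xi> (Imp FTop (Imp FBot FBot))"
    "realizes N \<xi> (Imp FBot (Imp FTop FBot))"
  shows "realizes N \<xi> (Imp FTop (Imp FTop FBot))"
proof -
  have "(\<xi>, \<eta> # \<eta>' # \<pi>) \<in> pole" if "wf_stack N \<pi>" for \<eta> \<eta>' \<pi>
  proof (rule core)
    show "(\<xi>, cq 0 # cp # \<pi>) \<in> pole" using assms(1) that pole_p
      unfolding realizes_def by auto
    show "(\<xi>, cp # cq 0 # \<pi>) \<in> pole" using assms(2) that pole_p
      unfolding realizes_def by auto
  qed
  then show ?thesis unfolding realizes_def by auto
qed

theorem corollary1:
  fixes N :: nat
  shows "(\<forall>\<xi>. wf_term N \<xi> \<longrightarrow>
            realizes N \<xi> (Imp FTop (Imp FBot FBot)) \<longrightarrow>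
            realizes N \<xi> (Imp FBot (Imp FTop FBot)) \<longrightarrow>
            realizes N \<xi> (Imp FTop (Imp FTop FBot)))
       \<and> realizes N lamxII (Neg (ForallB (\<lambda>x. Imp (Neq x False) (Imp (Neq x True) FBot))))
       \<and> realizes N cW (ForallB (\<lambda>x.
            Imp (ForallB (\<lambda>y. Imp (Neq y False) (Imp (Neq y x) (NotLe y x))))
                (Imp (Neq x False) FBot)))"
proof (intro conjI)
  show "\<forall>\<xi>. wf_term N \<xi> \<longrightarrow>
            realizes N \<xi> (Imp FTop (Imp FBot FBot)) \<longrightarrow>
            realizes N \<xi> (Imp FBot (Imp FTop FBot)) \<longrightarrow>
            realizes N \<xi> (Imp FTop (Imp FTop FBot))" using part1 by blast
next
  show "realizes N lamxII (Neg (ForallB (\<lambda>x. Imp (Neq x False) (Imp (Neq x True) FBot))))"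
    unfolding realizes_def Neg_def
  proof
    fix \<pi> assume "\<pi> \<in> fval N (Imp (ForallB (\<lambda>x. Imp (Neq x False) (Imp (Neq x True) FBot))) FBot)"
    then obtain \<eta> \<rho> where e: "\<pi> = \<eta> # \<rho>" "wf_stack N \<rho>"
      and r1: "realizes N \<eta> (Imp FBot (Imp FTop FBot))"
      and r2: "realizes N \<eta> (Imp FTop (Imp FBot FBot))"
      unfolding realizes_def by auto
    have "realizes N \<eta> (Imp FTop (Imp FTop FBot))" using part1 r1 r2 by blast
    then have "(\<eta>, cI # cI # \<rho>) \<in> pole" using e unfolding realizes_def by auto
    moreover have "exec (lamxII, \<eta> # \<rho>) (\<eta>, cI # cI # \<rho>)"
      unfolding exec_def lamxII_def
      apply (rule converse_rtranclp_into_rtranclp, rule step.push)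
      apply (rule converse_rtranclp_into_rtranclp, rule step.push)
      apply (rule converse_rtranclp_into_rtranclp, rule step.rC)
      apply (rule converse_rtranclp_into_rtranclp, rule step.push)
      apply (rule converse_rtranclp_into_rtranclp, rule step.push)
      apply (rule converse_rtranclp_into_rtranclp, rule step.rC)
      apply (rule converse_rtranclp_into_rtranclp, rule step.rI)
      apply (rule rtranclp.rtrancl_refl)
      done
    ultimately show "(lamxII, \<pi>) \<in> pole" using e pole_back by blast
  qed
next
  show "realizes N cW (ForallB (\<lambda>x.
            Imp (ForallB (\<lambda>y. Imp (Neq y False) (Imp (Neq y x) (NotLe y x))))
                (Imp (Neq x False) FBot)))"
    unfolding realizes_def
  proof
    fix \<pi> assume H: "\<pi> \<in> fval N (ForallB (\<lambda>x.
            Imp (ForallB (\<lambda>y. Imp (Neq y False) (Imp (Neq y x) (NotLe y x))))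
                (Imp (Neq x False) FBot)))"
    have W: "(cW, \<eta> # a # \<rho>) \<in> pole" if "(\<eta>, a # a # \<rho>) \<in> pole" for \<eta> a \<rho>
      using that pole_back[of "(cW, \<eta> # a # \<rho>)"] step.rW unfolding exec_def by blast
    from H show "(cW, \<pi>) \<in> pole"
      unfolding fval.simps(4)
    proof (elim UnE)
      assume "\<pi> \<in> fval N (Imp (ForallB (\<lambda>y. Imp (Neq y False) (Imp (Neq y False) (NotLe y False))))
                (Imp (Neq False False) FBot))"
      then obtain \<eta> a \<rho> where e: "\<pi> = \<eta> # a # \<rho>" "\<forall>\<rho>'. wf_stack N \<rho>' \<longrightarrow> (a, \<rho>') \<in> pole"
        "wf_term N a" "wf_stack N \<rho>"
        and r: "realizes N \<eta> (Imp FBot (Imp FBot FBot))"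
        unfolding realizes_def by auto
      have "(\<eta>, a # a # \<rho>) \<in> pole" using r e unfolding realizes_def by auto
      then show ?thesis using W e by simp
    next
      assume "\<pi> \<in> fval N (Imp (ForallB (\<lambda>y. Imp (Neq y False) (Imp (Neq y True) (NotLe y True))))
                (Imp (Neq True False) FBot))"
      then obtain \<eta> a \<rho> where e: "\<pi> = \<eta> # a # \<rho>"
        "wf_term N a" "wf_stack N \<rho>"
        and r1: "realizes N \<eta> (Imp FBot (Imp FTop FBot))"
        and r2: "realizes N \<eta> (Imp FTop (Imp FBot FBot))"
        unfolding realizes_def by auto
      have "realizes N \<eta> (Imp FTop (Imp FTop FBot))" using part1 r1 r2 by blast
      then have "(\<eta>, a # a # \<rho>) \<in> pole" using e unfolding realizes_def by auto
      then show ?thesis using W e by simp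
    qed
  qed
qed

end
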